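(* Let $T>0$ and let $l,r:[0,T]\times\mathbb{R}\to\mathbb{R}$ satisfy Assumption (A) below. Then for every $s\in C[0,T]$ and every $a\in\mathbb{R}$ with $l(T,a)\le 0\le r(T,a)$, the backward Skorokhod problem $\mathbb{BSP}_l^r(s,a)$ admits a unique solution $(x,k)\in C[0,T]\times BV[0,T]$.
   Context: $C[0,T]$ denotes the real continuous functions on $[0,T]$; $BV[0,T]$ the functions in $C[0,T]$ starting from $0$ with bounded variation; $I[0,T]$ the nondecreasing functions in $C[0,T]$ starting from $0$. Assumption (A) on $l,r:[0,T]\times\mathbb{R}\to\mathbb{R}$: (i) for each $x\in\mathbb{R}$, $l(\cdot,x),r(\cdot,x)\in C[0,T]$; (ii) for each $t\in[0,T]$, $l(t,\cdot)$ and $r(t,\cdot)$ are strictly increasing; (iii) there are constants $0<c<C<\infty$ such that for all $t\in[0,T]$, $x,y\in\mathbb{R}$: $c|x-y|\le|l(t,x)-l(t,y)|\le C|x-y|$ and $c|x-y|\le|r(t,x)-r(t,y)|\le C|x-y|$; (iv) $\inf_{(t,x)\in[0,T]\times\mathbb{R}}(r(t,x)-l(t,x))>0$. Backward Skorokhod problem: given $s\in C[0,T]$, $a\in\mathbb{R}$ with $l(T,a)\le0\le r(T,a)$, a pair $(x,k)\in C[0,T]\times BV[0,T]$ is a solution of $\mathbb{BSP}_l^r(s,a)$ if (i) $x_t=a+s_T-s_t+k_T-k_t$ for all $t\in[0,T]$; (ii) $l(t,x_t)\le 0\le r(t,x_t)$ for all $t\in[0,T]$; (iii) $k=k^r-k^l$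 with $k^r,k^l\in I[0,T]$ satisfying $\int_0^T \mathbf 1_{\{l(s,x_s)<0\}}\,dk^l_s=0$ and $\int_0^T \mathbf 1_{\{r(s,x_s)>0\}}\,dk^r_s=0$. *)

theory Defs
  imports "HOL-Analysis.Analysis"
begin

definition Cfun :: "real \<Rightarrow> (real \<Rightarrow> real) \<Rightarrow> bool" where
  "Cfun T f \<longleftrightarrow> continuous_on {0..T} f"

definition bounded_var :: "real \<Rightarrow> (real \<Rightarrow> real) \<Rightarrow> bool" where
  "bounded_var T f \<longleftrightarrow> (\<exists>B. \<forall>(ts :: nat \<Rightarrow> real) n.
     (0 \<le> ts 0 \<and> ts n \<le> T \<and> (\<forall>i<n. ts i \<le> ts (Suc i))) \<longrightarrow>
     (\<Sum>i<n. \<bar>f (ts (Suc i)) - f (ts i)\<bar>) \<le> B)"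

definition BVfun :: "real \<Rightarrow> (real \<Rightarrow> real) \<Rightarrow> bool" where
  "BVfun T f \<longleftrightarrow> Cfun T f \<and> f 0 = 0 \<and> bounded_var T f"

definition Ifun :: "real \<Rightarrow> (real \<Rightarrow> real) \<Rightarrow> bool" where
  "Ifun T f \<longleftrightarrow> Cfun T f \<and> f 0 = 0 \<and> mono_on {0..T} f"

definition LS_measure :: "real \<Rightarrow> (real \<Rightarrow> real) \<Rightarrow> real measure" where
  "LS_measure T f = interval_measure (\<lambda>u. f (max 0 (min T u)))"

definition assumptionA :: "real \<Rightarrow> (real \<Rightarrow> real \<Rightarrow> real) \<Rightarrow> (real \<Rightarrow> real \<Rightarrow> real) \<Rightarrow> bool" where
  "assumptionA T l r \<longleftrightarrow>
     (\<forall>x. continuous_on {0..T} (\<lambda>t. l t x) \<and> continuous_on {0..T} (\<lambda>t. r t x)) \<and>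
     (\<forall>t\<in>{0..T}. strict_mono (l t) \<and> strict_mono (r t)) \<and>
     (\<exists>c C. 0 < c \<and> c < C \<and> (\<forall>t\<in>{0..T}. \<forall>x y.
        c * \<bar>x - y\<bar> \<le> \<bar>l t x - l t y\<bar> \<and> \<bar>l t x - l t y\<bar> \<le> C * \<bar>x - y\<bar> \<and>
        c * \<bar>x - y\<bar> \<le> \<bar>r t x - r t y\<bar> \<and> \<bar>r t x - r t y\<bar> \<le> C * \<bar>x - y\<bar>)) \<and>
     (\<exists>\<delta>>0. \<forall>t\<in>{0..T}. \<forall>x. r t x - l t x \<ge> \<delta>)"

definition BSP_solution :: "real \<Rightarrow> (real \<Rightarrow> real \<Rightarrow> real) \<Rightarrow> (real \<Rightarrow> real \<Rightarrow> real) \<Rightarrow>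
    (real \<Rightarrow> real) \<Rightarrow> real \<Rightarrow> (real \<Rightarrow> real) \<Rightarrow> (real \<Rightarrow> real) \<Rightarrow> bool" where
  "BSP_solution T l r s a x k \<longleftrightarrow>
     Cfun T x \<and> BVfun T k \<and>
     (\<forall>t\<in>{0..T}. x t = a + s T - s t + k T - k t) \<and>
     (\<forall>t\<in>{0..T}. l t (x t) \<le> 0 \<and> 0 \<le> r t (x t)) \<and>
     (\<exists>kr kl. Ifun T kr \<and> Ifun T kl \<and> (\<forall>t\<in>{0..T}. k t = kr t - kl t) \<and>
        (\<integral>\<^sup>+ u. indicator {u\<in>{0..T}. l u (x u) < 0} u \<partial>LS_measure T kl) = 0 \<and>
        (\<integral>\<^sup>+ u. indicator {u\<in>{0..T}. r u (x u) > 0} u \<partial>LS_measure T kr) = 0)"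

end

theory Submission
  imports Defs
begin

definition rmax :: "(real \<Rightarrow> real) \<Rightarrow> real \<Rightarrow> real \<Rightarrow> real" where
  "rmax g b t = Sup (g ` {t..b})"

lemma rmax_attain:
  assumes "continuous_on {a..b} g" "a \<le> t" "t \<le> b"
  shows "\<exists>u\<in>{t..b}. rmax g b t = g u \<and> (\<forall>v\<in>{t..b}. g v \<le> g u)"
proof -
  have "continuous_on {t..b} g" using assms by (auto intro: continuous_on_subset)
  then obtain u where u: "u \<in> {t..b}" "\<forall>v\<in>{t..b}. g v \<le> g u"
    using continuous_attains_sup[of "{t..b}" g] assms by auto
  then have "rmax g b t = g u" unfolding rmax_def by (intro cSup_eq_maximum) auto
  then show ?thesis using u by auto
qed

lemma rmax_ge:
  assumes "continuous_on {a..b} g" "a \<le> t" "t \<le> v" "v \<le> b"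
  shows "g v \<le> rmax g b t"
  using rmax_attain[OF assms(1,2)] assms by force

lemma rmax_mono:
  assumes "continuous_on {a..b} g" "a \<le> t" "t \<le> t'" "t' \<le> b"
  shows "rmax g b t' \<le> rmax g b t"
proof -
  have at: "a \<le> t'" using assms by linarith
  obtain u where "u\<in>{t'..b}" "rmax g b t' = g u" using rmax_attain[OF assms(1) at assms(4)] by blast
  then show ?thesis using rmax_ge[OF assms(1), of t u] assms by auto
qed

lemma rmax_end:
  shows "rmax g b b = g b"
  unfolding rmax_def by simp

lemma rmax_cont:
  assumes "continuous_on {a..b} g"
  shows "continuous_on {a..b} (rmax g b)"
proof (rule uniformly_continuous_imp_continuous, unfold uniformly_continuous_on_def, intro allI impI)
  fix e :: real assume e: "e > 0"
  have "uniformly_continuous_on {a..b} g" using assms compact_uniformly_continuous by blast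
  then obtain d where d: "d > 0" "\<forall>x\<in>{a..b}. \<forall>x'\<in>{a..b}. dist x' x < d \<longrightarrow> dist (g x') (g x) < e/2"
    unfolding uniformly_continuous_on_def using e by (meson half_gt_zero)
  have key: "rmax g b t \<le> rmax g b t' + e/2" if "t \<in> {a..b}" "t' \<in> {a..b}" "t \<le> t'" "t' - t < d" for t t'
  proof -
    have tt: "a \<le> t" "t \<le> b" using that by auto
    obtain u where u: "u\<in>{t..b}" "rmax g b t = g u" using rmax_attain[OF assms tt] by auto
    show ?thesis
    proof (cases "t' \<le> u")
      case True
      then show ?thesis using rmax_ge[OF assms, of t' u] u that e by auto
    next
      case False
      then have "dist u t' < d" using u that by (auto simp: dist_real_def)
      moreover have "u \<in> {a..b}" using u that by auto
      ultimately have "dist (g u) (g t') < e/2" using d(2) that(2) by blast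
      then have "\<bar>g u - g t'\<bar> < e/2" by (simp add: dist_real_def)
      then have "g u < g t' + e/2" by linarith
      moreover have "g t' \<le> rmax g b t'" using rmax_ge[OF assms, of t' t'] that by auto
      ultimately show ?thesis using u by auto
    qed
  qed
  show "\<exists>d>0. \<forall>x\<in>{a..b}. \<forall>x'\<in>{a..b}. dist x' x < d \<longrightarrow> dist (rmax g b x') (rmax g b x) < e"
  proof (intro exI[of _ d] conjI ballI impI)
    fix x x' assume xs: "x \<in> {a..b}" "x' \<in> {a..b}" "dist x' x < d"
    show "dist (rmax g b x') (rmax g b x) < e"
    proof (cases "x \<le> x'")
      case True
      then show ?thesis using key[of x x'] rmax_mono[OF assms, of x x'] xs e by (auto simp: dist_real_def)
    next
      case False
      then show ?thesis using key[of x' x] rmax_mono[OF assms, of x' x] xs e by (auto simp: dist_real_def)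
    qed
  qed (use d in auto)
qed

definition cellsol :: "(real\<Rightarrow>real) \<Rightarrow> (real\<Rightarrow>real) \<Rightarrow> (real\<Rightarrow>real) \<Rightarrow> real \<Rightarrow> real \<Rightarrow> real \<Rightarrow> (real\<Rightarrow>real) \<Rightarrow> (real\<Rightarrow>real) \<Rightarrow> (real\<Rightarrow>real) \<Rightarrow> bool" where
"cellsol lo hi s \<tau> \<tau>1 b x R L \<longleftrightarrow>
  continuous_on {\<tau>..\<tau>1} x \<and> continuous_on {\<tau>..\<tau>1} R \<and> continuous_on {\<tau>..\<tau>1} L \<and>
  R \<tau>1 = 0 \<and> L \<tau>1 = 0 \<and>
  (\<forall>t t'. \<tau> \<le> t \<longrightarrow> t \<le> t' \<longrightarrow> t' \<le> \<tau>1 \<longrightarrow> R t' \<le> R t \<and> L t' \<le> L t) \<and>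
  (\<forall>t\<in>{\<tau>..\<tau>1}. x t = b + s \<tau>1 - s t + R t - L t \<and> lo t \<le> x t \<and> x t \<le> hi t) \<and>
  (\<forall>\<alpha> \<beta>. \<tau> \<le> \<alpha> \<longrightarrow> \<alpha> \<le> \<beta> \<longrightarrow> \<beta> \<le> \<tau>1 \<longrightarrow> (\<forall>u\<in>{\<alpha>..\<beta>}. lo u < x u) \<longrightarrow> R \<alpha> = R \<beta>) \<and>
  (\<forall>\<alpha> \<beta>. \<tau> \<le> \<alpha> \<longrightarrow> \<alpha> \<le> \<beta> \<longrightarrow> \<beta> \<le> \<tau>1 \<longrightarrow> (\<forall>u\<in>{\<alpha>..\<beta>}. x u < hi u) \<longrightarrow> L \<alpha> = L \<beta>)"

lemma cellsolI:
  assumes "continuous_on {\<tau>..\<tau>1} x" "continuous_on {\<tau>..\<tau>1} R" "continuous_on {\<tau>..\<tau>1} L"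
    "R \<tau>1 = 0" "L \<tau>1 = 0"
    "\<And>t t'. \<tau> \<le> t \<Longrightarrow> t \<le> t' \<Longrightarrow> t' \<le> \<tau>1 \<Longrightarrow> R t' \<le> R t"
    "\<And>t t'. \<tau> \<le> t \<Longrightarrow> t \<le> t' \<Longrightarrow> t' \<le> \<tau>1 \<Longrightarrow> L t' \<le> L t"
    "\<And>t. \<tau> \<le> t \<Longrightarrow> t \<le> \<tau>1 \<Longrightarrow> x t = b + s \<tau>1 - s t + R t - L t"
    "\<And>t. \<tau> \<le> t \<Longrightarrow> t \<le> \<tau>1 \<Longrightarrow> lo t \<le> x t"
    "\<And>t. \<tau> \<le> t \<Longrightarrow> t \<le> \<tau>1 \<Longrightarrow> x t \<le> hi t"
    "\<And>\<alpha> \<beta>. \<tau> \<le> \<alpha> \<Longrightarrow> \<alpha> \<le> \<beta> \<Longrightarrow> \<beta> \<le> \<tau>1 \<Longrightarrow> (\<And>u. \<alpha> \<le> u \<Longrightarrow> u \<le> \<beta> \<Longrightarrow> lo u < x u) \<Longrightarrow> R \<alpha> = R \<beta>"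
    "\<And>\<alpha> \<beta>. \<tau> \<le> \<alpha> \<Longrightarrow> \<alpha> \<le> \<beta> \<Longrightarrow> \<beta> \<le> \<tau>1 \<Longrightarrow> (\<And>u. \<alpha> \<le> u \<Longrightarrow> u \<le> \<beta> \<Longrightarrow> x u < hi u) \<Longrightarrow> L \<alpha> = L \<beta>"
  shows "cellsol lo hi s \<tau> \<tau>1 b x R L"
  unfolding cellsol_def
proof (intro conjI allI impI ballI)
  fix \<alpha> \<beta> assume h: "\<tau> \<le> \<alpha>" "\<alpha> \<le> \<beta>" "\<beta> \<le> \<tau>1" "\<forall>u\<in>{\<alpha>..\<beta>}. lo u < x u"
  show "R \<alpha> = R \<beta>" by (rule assms(11)[OF h(1-3)]) (use h(4) in auto)
next
  fix \<alpha> \<beta> assume h: "\<tau> \<le> \<alpha>" "\<alpha> \<le> \<beta>" "\<beta> \<le> \<tau>1" "\<forall>u\<in>{\<alpha>..\<beta>}. x u < hi u"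
  show "L \<alpha> = L \<beta>" by (rule assms(12)[OF h(1-3)]) (use h(4) in auto)
qed (simp_all add: assms(1-7,9,10), simp add: assms(8))

lemma cellsolD:
  assumes "cellsol lo hi s \<tau> \<tau>1 b x R L"
  shows "continuous_on {\<tau>..\<tau>1} x" "continuous_on {\<tau>..\<tau>1} R" "continuous_on {\<tau>..\<tau>1} L"
    "R \<tau>1 = 0" "L \<tau>1 = 0"
    "\<And>t t'. \<tau> \<le> t \<Longrightarrow> t \<le> t' \<Longrightarrow> t' \<le> \<tau>1 \<Longrightarrow> R t' \<le> R t"
    "\<And>t t'. \<tau> \<le> t \<Longrightarrow> t \<le> t' \<Longrightarrow> t' \<le> \<tau>1 \<Longrightarrow> L t' \<le> L t"
    "\<And>t. \<tau> \<le> t \<Longrightarrow> t \<le> \<tau>1 \<Longrightarrow> x t = b + s \<tau>1 - s t + R t - L t"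
    "\<And>t. \<tau> \<le> t \<Longrightarrow> t \<le> \<tau>1 \<Longrightarrow> lo t \<le> x t"
    "\<And>t. \<tau> \<le> t \<Longrightarrow> t \<le> \<tau>1 \<Longrightarrow> x t \<le> hi t"
    "\<And>\<alpha> \<beta>. \<tau> \<le> \<alpha> \<Longrightarrow> \<alpha> \<le> \<beta> \<Longrightarrow> \<beta> \<le> \<tau>1 \<Longrightarrow> (\<And>u. \<alpha> \<le> u \<Longrightarrow> u \<le> \<beta> \<Longrightarrow> lo u < x u) \<Longrightarrow> R \<alpha> = R \<beta>"
    "\<And>\<alpha> \<beta>. \<tau> \<le> \<alpha> \<Longrightarrow> \<alpha> \<le> \<beta> \<Longrightarrow> \<beta> \<le> \<tau>1 \<Longrightarrow> (\<And>u. \<alpha> \<le> u \<Longrightarrow> u \<le> \<beta> \<Longrightarrow> x u < hi u) \<Longrightarrow> L \<alpha> = L \<beta>"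
  using assms unfolding cellsol_def by (auto simp: Ball_def)

lemma cellsol_neg:
  assumes "cellsol lo hi s \<tau> \<tau>1 b x R L"
  shows "cellsol (\<lambda>t. - hi t) (\<lambda>t. - lo t) (\<lambda>t. - s t) \<tau> \<tau>1 (-b) (\<lambda>t. - x t) L R"
proof -
  note D = cellsolD[OF assms]
  show ?thesis
  proof (rule cellsolI)
    show "continuous_on {\<tau>..\<tau>1} (\<lambda>t. - x t)" using D(1) by (rule continuous_on_minus)
    fix t assume "\<tau> \<le> t" "t \<le> \<tau>1"
    then show "- x t = - b + - s \<tau>1 - - s t + L t - R t" "- hi t \<le> - x t" "- x t \<le> - lo t"
      using D(8-10)[of t] by auto
  next
    fix \<alpha> \<beta> assume h: "\<tau> \<le> \<alpha>" "\<alpha> \<le> \<beta>" "\<beta> \<le> \<tau>1" "\<And>u. \<alpha> \<le> u \<Longrightarrow> u \<le> \<beta> \<Longrightarrow> - hi u < - x u"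
    show "L \<alpha> = L \<beta>" by (rule D(12)[OF h(1-3)]) (use h(4) in force)
  next
    fix \<alpha> \<beta> assume h: "\<tau> \<le> \<alpha>" "\<alpha> \<le> \<beta>" "\<beta> \<le> \<tau>1" "\<And>u. \<alpha> \<le> u \<Longrightarrow> u \<le> \<beta> \<Longrightarrow> - x u < - lo u"
    show "R \<alpha> = R \<beta>" by (rule D(11)[OF h(1-3)]) (use h(4) in force)
  qed (use D(2-7) in auto)
qed

lemma glue_cont:
  fixes f g :: "real \<Rightarrow> real"
  assumes "continuous_on {\<tau>..\<tau>1} f" "continuous_on {\<tau>1..\<tau>2} g" "f \<tau>1 = g \<tau>1" "\<tau> \<le> \<tau>1" "\<tau>1 \<le> \<tau>2"
  shows "continuous_on {\<tau>..\<tau>2} (\<lambda>t. if \<tau>1 \<le> t then g t else f t)"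
proof -
  have "continuous_on ({\<tau>..\<tau>1} \<union> {\<tau>1..\<tau>2}) (\<lambda>t. if \<tau>1 \<le> t then g t else f t)"
  proof (rule continuous_on_closed_Un)
    show "continuous_on {\<tau>..\<tau>1} (\<lambda>t. if \<tau>1 \<le> t then g t else f t)"
      by (rule continuous_on_eq[OF assms(1)]) (use assms(3) in auto)
    show "continuous_on {\<tau>1..\<tau>2} (\<lambda>t. if \<tau>1 \<le> t then g t else f t)"
      by (rule continuous_on_eq[OF assms(2)]) auto
  qed auto
  moreover have "{\<tau>..\<tau>1} \<union> {\<tau>1..\<tau>2} = {\<tau>..\<tau>2}" using assms by auto
  ultimately show ?thesis by simp
qed

lemma glue:
  assumes c1: "cellsol lo hi s \<tau> \<tau>1 (x \<tau>1) x' R' L'" and c2: "cellsol lo hi s \<tau>1 \<tau>2 b x R L"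
    and o: "\<tau> \<le> \<tau>1" "\<tau>1 \<le> \<tau>2"
  shows "cellsol lo hi s \<tau> \<tau>2 b (\<lambda>t. if \<tau>1 \<le> t then x t else x' t)
     (\<lambda>t. if \<tau>1 \<le> t then R t else R \<tau>1 + R' t) (\<lambda>t. if \<tau>1 \<le> t then L t else L \<tau>1 + L' t)"
proof -
  note A = cellsolD[OF c1] and B = cellsolD[OF c2]
  have x1: "x' \<tau>1 = x \<tau>1" using A(8)[of \<tau>1] A(4,5) o by simp
  show ?thesis
  proof (rule cellsolI)
    show "continuous_on {\<tau>..\<tau>2} (\<lambda>t. if \<tau>1 \<le> t then x t else x' t)"
      using glue_cont[OF A(1) B(1) x1 o] .
    show "continuous_on {\<tau>..\<tau>2} (\<lambda>t. if \<tau>1 \<le> t then R t else R \<tau>1 + R' t)"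
      by (rule glue_cont[OF _ B(2) _ o]) (use A(2,4) in \<open>auto intro: continuous_intros\<close>)
    show "continuous_on {\<tau>..\<tau>2} (\<lambda>t. if \<tau>1 \<le> t then L t else L \<tau>1 + L' t)"
      by (rule glue_cont[OF _ B(3) _ o]) (use A(3,5) in \<open>auto intro: continuous_intros\<close>)
    show "(if \<tau>1 \<le> \<tau>2 then R \<tau>2 else R \<tau>1 + R' \<tau>2) = 0" "(if \<tau>1 \<le> \<tau>2 then L \<tau>2 else L \<tau>1 + L' \<tau>2) = 0"
      using B(4,5) o by auto
  next
    fix t t' assume h: "\<tau> \<le> t" "t \<le> t'" "t' \<le> \<tau>2"
    have "R t' \<le> R \<tau>1" if "\<tau>1 \<le> t'" using B(6)[of \<tau>1 t'] that h by auto
    moreover have "R' \<tau>1 \<le> R' t" if "t \<le> \<tau>1" using A(6)[of t \<tau>1] that h by auto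
    moreover have "R t' \<le> R t" if "\<tau>1 \<le> t" using B(6)[of t t'] that h by auto
    moreover have "R' t' \<le> R' t" if "t' \<le> \<tau>1" using A(6)[of t t'] that h by auto
    ultimately show "(if \<tau>1 \<le> t' then R t' else R \<tau>1 + R' t') \<le> (if \<tau>1 \<le> t then R t else R \<tau>1 + R' t)"
      using A(4) h by auto
  next
    fix t t' assume h: "\<tau> \<le> t" "t \<le> t'" "t' \<le> \<tau>2"
    have "L t' \<le> L \<tau>1" if "\<tau>1 \<le> t'" using B(7)[of \<tau>1 t'] that h by auto
    moreover have "L' \<tau>1 \<le> L' t" if "t \<le> \<tau>1" using A(7)[of t \<tau>1] that h by auto
    moreover have "L t' \<le> L t" if "\<tau>1 \<le> t" using B(7)[of t t'] that h by auto
    moreover have "L' t' \<le> L' t" if "t' \<le> \<tau>1" using A(7)[of t t'] that h by auto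
    ultimately show "(if \<tau>1 \<le> t' then L t' else L \<tau>1 + L' t') \<le> (if \<tau>1 \<le> t then L t else L \<tau>1 + L' t)"
      using A(5) h by auto
  next
    fix t assume h: "\<tau> \<le> t" "t \<le> \<tau>2"
    have xb: "x \<tau>1 = b + s \<tau>2 - s \<tau>1 + R \<tau>1 - L \<tau>1" using B(8)[of \<tau>1] o by simp
    show "(if \<tau>1 \<le> t then x t else x' t) = b + s \<tau>2 - s t + (if \<tau>1 \<le> t then R t else R \<tau>1 + R' t) - (if \<tau>1 \<le> t then L t else L \<tau>1 + L' t)"
      using A(8)[of t] B(8)[of t] xb h by auto
    show "lo t \<le> (if \<tau>1 \<le> t then x t else x' t)" using A(9)[of t] B(9)[of t] h by auto
    show "(if \<tau>1 \<le> t then x t else x' t) \<le> hi t" using A(10)[of t] B(10)[of t] h by auto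
  next
    fix \<alpha> \<beta> assume h: "\<tau> \<le> \<alpha>" "\<alpha> \<le> \<beta>" "\<beta> \<le> \<tau>2" and P: "\<And>u. \<alpha> \<le> u \<Longrightarrow> u \<le> \<beta> \<Longrightarrow> lo u < (if \<tau>1 \<le> u then x u else x' u)"
    show "(if \<tau>1 \<le> \<alpha> then R \<alpha> else R \<tau>1 + R' \<alpha>) = (if \<tau>1 \<le> \<beta> then R \<beta> else R \<tau>1 + R' \<beta>)"
    proof (cases "\<tau>1 \<le> \<alpha>")
      case True
      have "R \<alpha> = R \<beta>" by (rule B(11)) (use h True P in force)+
      then show ?thesis using True h by auto
    next
      case False
      show ?thesis
      proof (cases "\<beta> < \<tau>1")
        case True
        have "R' \<alpha> = R' \<beta>" by (rule A(11)) (use h True P in force)+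
        then show ?thesis using True False by auto
      next
        case F2: False
        have P1: "lo u < x' u" if "\<alpha> \<le> u" "u \<le> \<tau>1" for u
          using P[of u] that F2 x1 by (cases "u = \<tau>1") auto
        have e1: "R' \<alpha> = R' \<tau>1" by (rule A(11)) (use h False P1 in force)+
        have P2: "lo u < x u" if "\<tau>1 \<le> u" "u \<le> \<beta>" for u using P[of u] that False by auto
        have e2: "R \<tau>1 = R \<beta>" by (rule B(11)) (use h F2 P2 in force)+
        show ?thesis using e1 e2 using False F2 A(4) by auto
      qed
    qed
  next
    fix \<alpha> \<beta> assume h: "\<tau> \<le> \<alpha>" "\<alpha> \<le> \<beta>" "\<beta> \<le> \<tau>2" and P: "\<And>u. \<alpha> \<le> u \<Longrightarrow> u \<le> \<beta> \<Longrightarrow> (if \<tau>1 \<le> u then x u else x' u) < hi u"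
    show "(if \<tau>1 \<le> \<alpha> then L \<alpha> else L \<tau>1 + L' \<alpha>) = (if \<tau>1 \<le> \<beta> then L \<beta> else L \<tau>1 + L' \<beta>)"
    proof (cases "\<tau>1 \<le> \<alpha>")
      case True
      have "L \<alpha> = L \<beta>" by (rule B(12)) (use h True P in force)+
      then show ?thesis using True h by auto
    next
      case False
      show ?thesis
      proof (cases "\<beta> < \<tau>1")
        case True
        have "L' \<alpha> = L' \<beta>" by (rule A(12)) (use h True P in force)+
        then show ?thesis using True False by auto
      next
        case F2: False
        have P1: "x' u < hi u" if "\<alpha> \<le> u" "u \<le> \<tau>1" for u
          using P[of u] that F2 x1 by (cases "u = \<tau>1") auto
        have e1: "L' \<alpha> = L' \<tau>1" by (rule A(12)) (use h False P1 in force)+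
        have P2: "x u < hi u" if "\<tau>1 \<le> u" "u \<le> \<beta>" for u using P[of u] that False by auto
        have e2: "L \<tau>1 = L \<beta>" by (rule B(12)) (use h F2 P2 in force)+
        show ?thesis using e1 e2 using False F2 A(5) by auto
      qed
    qed
  qed
qed

definition good :: "(real\<Rightarrow>real) \<Rightarrow> (real\<Rightarrow>real) \<Rightarrow> (real\<Rightarrow>real) \<Rightarrow> real \<Rightarrow> real \<Rightarrow> real \<Rightarrow> bool" where
"good lo hi s T \<eta> h \<longleftrightarrow> continuous_on {0..T} lo \<and> continuous_on {0..T} hi \<and> continuous_on {0..T} s \<and> \<eta> > 0 \<and>
  (\<forall>t\<in>{0..T}. \<eta> \<le> hi t - lo t) \<and>
  (\<forall>t\<in>{0..T}. \<forall>t'\<in>{0..T}. \<bar>t - t'\<bar> \<le> h \<longrightarrow> \<bar>s t - s t'\<bar> < \<eta>/4 \<and> \<bar>hi t - hi t'\<bar> \<le> \<eta>/4 \<and> \<bar>lo t - lo t'\<bar> \<le> \<eta>/4)"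

lemma good_neg:
  assumes "good lo hi s T \<eta> h"
  shows "good (\<lambda>t. - hi t) (\<lambda>t. - lo t) (\<lambda>t. - s t) T \<eta> h"
proof -
  have e: "\<bar>- a - - b\<bar> = \<bar>a - b\<bar>" for a b :: real by linarith
  show ?thesis using assms unfolding good_def e by (auto intro: continuous_on_minus)
qed

lemma cell_lower:
  assumes g: "good lo hi s T \<eta> h" and o: "0 \<le> \<tau>" "\<tau> \<le> \<tau>1" "\<tau>1 \<le> T" "\<tau>1 - \<tau> \<le> h"
    and b: "lo \<tau>1 \<le> b" "b \<le> (lo \<tau>1 + hi \<tau>1)/2"
  shows "\<exists>x R L. cellsol lo hi s \<tau> \<tau>1 b x R L"
proof -
  note G = g[unfolded good_def]
  define z where "z t = b + s \<tau>1 - s t" for t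
  define gg where "gg u = max 0 (lo u - z u)" for u
  define R where "R = rmax gg \<tau>1"
  have sub: "{\<tau>..\<tau>1} \<subseteq> {0..T}" using o by auto
  have cs: "continuous_on {\<tau>..\<tau>1} s" "continuous_on {\<tau>..\<tau>1} lo"
    using continuous_on_subset[OF _ sub] G by blast+
  have cz: "continuous_on {\<tau>..\<tau>1} z" unfolding z_def using cs by (intro continuous_intros)
  have cg: "continuous_on {\<tau>..\<tau>1} gg" unfolding gg_def using cz cs by (intro continuous_intros)
  have cR: "continuous_on {\<tau>..\<tau>1} R" unfolding R_def by (rule rmax_cont[OF cg])
  have R1: "R \<tau>1 = 0" unfolding R_def rmax_end gg_def z_def using b by simp
  have gge: "0 \<le> gg u" for u unfolding gg_def by simp
  have osc: "\<bar>s t - s t'\<bar> < \<eta>/4 \<and> \<bar>hi t - hi t'\<bar> \<le> \<eta>/4" if "t \<in> {\<tau>..\<tau>1}" "t' \<in> {\<tau>..\<tau>1}" for t t'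
  proof -
    have "\<bar>t - t'\<bar> \<le> h" using that o by auto
    then show ?thesis using G that sub by blast
  qed
  have gap: "\<eta> \<le> hi t - lo t" if "t \<in> {\<tau>..\<tau>1}" for t using G that sub by blast
  show ?thesis
  proof (rule exI[of _ "\<lambda>t. z t + R t"], rule exI[of _ R], rule exI[of _ "\<lambda>t. 0"], rule cellsolI)
    show "continuous_on {\<tau>..\<tau>1} (\<lambda>t. z t + R t)" using cz cR by (rule continuous_on_add)
    show "continuous_on {\<tau>..\<tau>1} R" by (rule cR)
    show "continuous_on {\<tau>..\<tau>1} (\<lambda>t. 0::real)" by simp
    show "R \<tau>1 = 0" by (rule R1)
  next
    fix t t' assume "\<tau> \<le> t" "t \<le> t'" "t' \<le> \<tau>1"
    then show "R t' \<le> R t" unfolding R_def by (rule rmax_mono[OF cg])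
  next
    fix t assume t: "\<tau> \<le> t" "t \<le> \<tau>1"
    show "z t + R t = b + s \<tau>1 - s t + R t - 0" by (simp add: z_def)
    have "gg t \<le> R t" unfolding R_def using rmax_ge[OF cg t(1) _ t(2)] by simp
    then show "lo t \<le> z t + R t" unfolding gg_def by simp
    obtain u where u: "u \<in> {t..\<tau>1}" "R t = gg u" using rmax_attain[OF cg t] unfolding R_def by blast
    have ut: "t \<in> {\<tau>..\<tau>1}" "u \<in> {\<tau>..\<tau>1}" "\<tau>1 \<in> {\<tau>..\<tau>1}" using u t by auto
    have f1: "\<bar>s \<tau>1 - s t\<bar> < \<eta>/4" "\<bar>hi \<tau>1 - hi t\<bar> \<le> \<eta>/4" using osc[OF ut(3) ut(1)] by auto
    have f2: "\<bar>s u - s t\<bar> < \<eta>/4" "\<bar>hi u - hi t\<bar> \<le> \<eta>/4" using osc[OF ut(2) ut(1)] by auto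
    have f3: "\<eta> \<le> hi u - lo u" "\<eta> \<le> hi \<tau>1 - lo \<tau>1" using gap ut by auto
    have e1: "b + s \<tau>1 - s t \<le> hi t" using f1 f3 b unfolding abs_less_iff abs_le_iff by (elim conjE) argo
    have e2: "lo u + s u - s t \<le> hi t" using f2 f3 unfolding abs_less_iff abs_le_iff by (elim conjE) argo
    show "z t + R t \<le> hi t" using e1 e2 unfolding u(2) gg_def z_def by linarith
  next
    fix \<alpha> \<beta> assume h: "\<tau> \<le> \<alpha>" "\<alpha> \<le> \<beta>" "\<beta> \<le> \<tau>1" and P: "\<And>u. \<alpha> \<le> u \<Longrightarrow> u \<le> \<beta> \<Longrightarrow> lo u < z u + R u"
    show "R \<alpha> = R \<beta>"
    proof (rule ccontr)
      assume ne: "R \<alpha> \<noteq> R \<beta>"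
      have "R \<beta> \<le> R \<alpha>" unfolding R_def using rmax_mono[OF cg h] .
      then have lt: "R \<beta> < R \<alpha>" using ne by simp
      have ha: "\<tau> \<le> \<alpha>" "\<alpha> \<le> \<tau>1" using h by auto
      obtain u where u: "u \<in> {\<alpha>..\<tau>1}" "R \<alpha> = gg u" using rmax_attain[OF cg ha] unfolding R_def by blast
      have ub: "u < \<beta>"
      proof (rule ccontr)
        assume "\<not> u < \<beta>"
        then have "gg u \<le> R \<beta>" unfolding R_def using rmax_ge[OF cg, of \<beta> u] h u by auto
        then show False using lt u by simp
      qed
      have "0 \<le> R \<beta>" unfolding R_def using rmax_ge[OF cg, of \<beta> \<beta>] h gge[of \<beta>] by auto
      then have pos: "gg u = lo u - z u" using lt u unfolding gg_def by auto
      have "gg u \<le> R u" unfolding R_def using rmax_ge[OF cg, of u u] u h by auto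
      moreover have "R u \<le> R \<alpha>" unfolding R_def using rmax_mono[OF cg, of \<alpha> u] u h by auto
      ultimately have "z u + R u = lo u" using pos u by simp
      then show False using P[of u] u ub by auto
    qed
  qed simp_all
qed

lemma cell_upper:
  assumes g: "good lo hi s T \<eta> h" and o: "0 \<le> \<tau>" "\<tau> \<le> \<tau>1" "\<tau>1 \<le> T" "\<tau>1 - \<tau> \<le> h"
    and b: "b \<le> hi \<tau>1" "(lo \<tau>1 + hi \<tau>1)/2 \<le> b"
  shows "\<exists>x R L. cellsol lo hi s \<tau> \<tau>1 b x R L"
proof -
  have "\<exists>x R L. cellsol (\<lambda>t. - hi t) (\<lambda>t. - lo t) (\<lambda>t. - s t) \<tau> \<tau>1 (-b) x R L"
    by (rule cell_lower[OF good_neg[OF g] o]) (use b in auto)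
  then obtain x R L where "cellsol (\<lambda>t. - hi t) (\<lambda>t. - lo t) (\<lambda>t. - s t) \<tau> \<tau>1 (-b) x R L" by blast
  from cellsol_neg[OF this] show ?thesis by auto
qed

lemma cell:
  assumes g: "good lo hi s T \<eta> h" and o: "0 \<le> \<tau>" "\<tau> \<le> \<tau>1" "\<tau>1 \<le> T" "\<tau>1 - \<tau> \<le> h"
    and b: "lo \<tau>1 \<le> b" "b \<le> hi \<tau>1"
  shows "\<exists>x R L. cellsol lo hi s \<tau> \<tau>1 b x R L"
proof (cases "b \<le> (lo \<tau>1 + hi \<tau>1)/2")
  case True then show ?thesis using cell_lower[OF g o] b by blast
next
  case False then show ?thesis using cell_upper[OF g o] b by simp
qed

lemma exists_sol:
  assumes g: "good lo hi s T \<eta> h" and h: "h > 0" and T: "0 \<le> T" and a: "lo T \<le> a" "a \<le> hi T"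
  shows "\<exists>x R L. cellsol lo hi s 0 T a x R L"
proof -
  have H: "\<forall>\<tau>. 0 \<le> \<tau> \<longrightarrow> \<tau> \<le> T \<longrightarrow> T - \<tau> \<le> real n * h \<longrightarrow> (\<exists>x R L. cellsol lo hi s \<tau> T a x R L)" for n
  proof (induction n)
    case 0
    show ?case
    proof (intro allI impI)
      fix \<tau> :: real assume t: "0 \<le> \<tau>" "\<tau> \<le> T" "T - \<tau> \<le> real 0 * h"
      then have tT: "\<tau> = T" by simp
      have "cellsol lo hi s \<tau> T a (\<lambda>_. a) (\<lambda>_. 0) (\<lambda>_. 0)"
        by (rule cellsolI) (use tT a in auto)
      then show "\<exists>x R L. cellsol lo hi s \<tau> T a x R L" by blast
    qed
  next
    case (Suc n)
    show ?case
    proof (intro allI impI)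
      fix \<tau> :: real assume t: "0 \<le> \<tau>" "\<tau> \<le> T" "T - \<tau> \<le> real (Suc n) * h"
      define \<tau>1 where "\<tau>1 = min T (\<tau> + h)"
      have t1: "0 \<le> \<tau>1" "\<tau>1 \<le> T" "T - \<tau>1 \<le> real n * h" "\<tau> \<le> \<tau>1" "\<tau>1 - \<tau> \<le> h"
        using t h unfolding \<tau>1_def by (auto simp: algebra_simps min_def)
      obtain x R L where c2: "cellsol lo hi s \<tau>1 T a x R L" using Suc.IH t1 by blast
      have bx: "lo \<tau>1 \<le> x \<tau>1" "x \<tau>1 \<le> hi \<tau>1" using cellsolD(9,10)[OF c2, of \<tau>1] t1 by auto
      obtain x' R' L' where c1: "cellsol lo hi s \<tau> \<tau>1 (x \<tau>1) x' R' L'"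
        using cell[OF g t(1) t1(4) t1(2) t1(5) bx] by blast
      show "\<exists>x R L. cellsol lo hi s \<tau> T a x R L" using glue[OF c1 c2 t1(4) t1(2)] by blast
    qed
  qed
  obtain n where "T < real n * h" using reals_Archimedean3[OF h] by blast
  then have "T - 0 \<le> real n * h" by simp
  then show ?thesis using H[of n] T by blast
qed

lemma ts_mono:
  fixes ts :: "nat \<Rightarrow> real"
  assumes "\<forall>i<n. ts i \<le> ts (Suc i)"
  shows "i \<le> j \<Longrightarrow> j \<le> n \<Longrightarrow> ts i \<le> ts j"
proof (induction j)
  case 0 then show ?case by simp
next
  case (Suc j)
  show ?case
  proof (cases "i = Suc j")
    case True then show ?thesis by simp
  next
    case False
    then have "i \<le> j" using Suc by simp
    moreover have "ts j \<le> ts (Suc j)" using assms Suc.prems by auto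
    ultimately show ?thesis using Suc.IH Suc.prems by linarith
  qed
qed

lemma bv_diff:
  assumes F: "mono_on {0..T} F" and G: "mono_on {0..T} G"
  shows "bounded_var T (\<lambda>t. F t - G t)"
  unfolding bounded_var_def
proof (intro exI allI impI)
  fix ts :: "nat \<Rightarrow> real" and n
  assume p: "0 \<le> ts 0 \<and> ts n \<le> T \<and> (\<forall>i<n. ts i \<le> ts (Suc i))"
  have inr: "ts i \<in> {0..T}" if "i \<le> n" for i
    using ts_mono[of n ts 0 i] ts_mono[of n ts i n] p that by auto
  have step: "\<bar>F (ts (Suc i)) - G (ts (Suc i)) - (F (ts i) - G (ts i))\<bar>
      \<le> (F (ts (Suc i)) - F (ts i)) + (G (ts (Suc i)) - G (ts i))" if "i < n" for i
  proof -
    have "F (ts i) \<le> F (ts (Suc i))" "G (ts i) \<le> G (ts (Suc i))"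
      using mono_onD[OF F] mono_onD[OF G] inr[of i] inr[of "Suc i"] p that by auto
    then show ?thesis by linarith
  qed
  have "(\<Sum>i<n. \<bar>F (ts (Suc i)) - G (ts (Suc i)) - (F (ts i) - G (ts i))\<bar>)
      \<le> (\<Sum>i<n. (F (ts (Suc i)) - F (ts i)) + (G (ts (Suc i)) - G (ts i)))"
    by (rule sum_mono) (use step in auto)
  also have "\<dots> = (F (ts n) - F (ts 0)) + (G (ts n) - G (ts 0))"
    by (simp add: sum.distrib sum_lessThan_telescope[of "\<lambda>i. F (ts i)"] sum_lessThan_telescope[of "\<lambda>i. G (ts i)"])
  also have "\<dots> \<le> (F T - F 0) + (G T - G 0)"
  proof -
    have "0 \<le> T" using p inr[of n] by auto
    have "F (ts n) \<le> F T" "G (ts n) \<le> G T" "F 0 \<le> F (ts 0)" "G 0 \<le> G (ts 0)"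
      using mono_onD[OF F] mono_onD[OF G] inr[of n] inr[of 0] \<open>0 \<le> T\<close> by auto
    then show ?thesis by linarith
  qed
  finally show "(\<Sum>i<n. \<bar>F (ts (Suc i)) - G (ts (Suc i)) - (F (ts i) - G (ts i))\<bar>)
      \<le> (if 0 \<le> T then (F T - F 0) + (G T - G 0) else 0)"
    using p inr[of n] by auto
qed

lemma clampG:
  assumes I: "Ifun T F" and T: "0 \<le> T"
  shows "\<And>x y. x \<le> y \<Longrightarrow> F (max 0 (min T x)) \<le> F (max 0 (min T y))"
    and "continuous_on UNIV (\<lambda>u. F (max 0 (min T u)))"
    and "\<And>a. continuous (at_right a) (\<lambda>u. F (max 0 (min T u)))"
proof -
  have m: "mono_on {0..T} F" and c: "continuous_on {0..T} F" using I unfolding Ifun_def Cfun_def by auto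
  show "F (max 0 (min T x)) \<le> F (max 0 (min T y))" if "x \<le> y" for x y
    by (rule mono_onD[OF m]) (use that T in auto)
  show cc: "continuous_on UNIV (\<lambda>u. F (max 0 (min T u)))"
    by (rule continuous_on_compose2[OF c, of UNIV "\<lambda>u. max 0 (min T u)"]) (use T in \<open>auto intro!: continuous_intros\<close>)
  show "continuous (at_right a) (\<lambda>u. F (max 0 (min T u)))" for a
  proof -
    have "isCont (\<lambda>u. F (max 0 (min T u))) a" using cc continuous_on_eq_continuous_at[of UNIV] by auto
    then show ?thesis by (rule continuous_at_imp_continuous_within)
  qed
qed

lemma emeas_Ioc:
  assumes I: "Ifun T F" and T: "0 \<le> T" and pq: "p \<le> q"
  shows "emeasure (LS_measure T F) {p<..q} = ennreal (F (max 0 (min T q)) - F (max 0 (min T p)))"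
  unfolding LS_measure_def
  using emeasure_interval_measure_Ioc_eq[of "\<lambda>u. F (max 0 (min T u))" p q] clampG[OF I T] pq by auto

lemma LS_null:
  assumes I: "Ifun T F" and T: "0 \<le> T" and A: "A \<subseteq> {0..T}"
    and loc: "\<And>u. u \<in> A \<Longrightarrow> \<exists>\<epsilon>>0. \<forall>v\<in>{0..T}. \<forall>w\<in>{0..T}. \<bar>v - u\<bar> < \<epsilon> \<longrightarrow> \<bar>w - u\<bar> < \<epsilon> \<longrightarrow> F v = F w"
  shows "(\<integral>\<^sup>+u. indicator A u \<partial>LS_measure T F) = 0"
proof -
  define G where "G u = F (max 0 (min T u))" for u
  define J where "J = {pq \<in> \<rat> \<times> \<rat>. fst pq \<le> snd pq \<and> G (fst pq) = G (snd pq)}"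
  define U where "U = (\<Union>pq\<in>J. {fst pq<..snd pq})"
  have cJ: "countable J"
    by (rule countable_subset[of J "\<rat> \<times> \<rat>"]) (auto simp: J_def countable_rat)
  have N: "{fst pq<..snd pq} \<in> null_sets (LS_measure T F)" if "pq \<in> J" for pq
  proof (rule null_setsI)
    show "emeasure (LS_measure T F) {fst pq<..snd pq} = 0"
      using emeas_Ioc[OF I T, of "fst pq" "snd pq"] that unfolding J_def G_def by auto
    show "{fst pq<..snd pq} \<in> sets (LS_measure T F)" unfolding LS_measure_def by simp
  qed
  have UN: "U \<in> null_sets (LS_measure T F)" unfolding U_def by (rule null_sets_UN'[OF cJ N])
  have AU: "A \<subseteq> U"
  proof
    fix u assume u: "u \<in> A"
    then have u0: "0 \<le> u" "u \<le> T" using A by auto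
    obtain \<epsilon> where e: "\<epsilon> > 0" "\<forall>v\<in>{0..T}. \<forall>w\<in>{0..T}. \<bar>v - u\<bar> < \<epsilon> \<longrightarrow> \<bar>w - u\<bar> < \<epsilon> \<longrightarrow> F v = F w"
      using loc[OF u] by blast
    obtain p where p: "p \<in> \<rat>" "u - \<epsilon> < p" "p < u" using Rats_dense_in_real[of "u - \<epsilon>" u] e by auto
    obtain q where q: "q \<in> \<rat>" "u < q" "q < u + \<epsilon>" using Rats_dense_in_real[of u "u + \<epsilon>"] e by auto
    have cp: "max 0 (min T p) \<in> {0..T}" "\<bar>max 0 (min T p) - u\<bar> < \<epsilon>"
      using p u0 T e by (auto simp: abs_if max_def min_def)
    have cq: "max 0 (min T q) \<in> {0..T}" "\<bar>max 0 (min T q) - u\<bar> < \<epsilon>"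
      using q u0 T e by (auto simp: abs_if max_def min_def)
    have "G p = G q" unfolding G_def using e(2) cp cq by blast
    then have "(p, q) \<in> J" unfolding J_def using p q by auto
    then show "u \<in> U" unfolding U_def using p q by force
  qed
  have "(\<integral>\<^sup>+u. indicator A u \<partial>LS_measure T F) \<le> (\<integral>\<^sup>+u. indicator U u \<partial>LS_measure T F)"
    by (rule nn_integral_mono) (use AU in \<open>auto simp: indicator_def\<close>)
  also have "\<dots> = emeasure (LS_measure T F) U" using UN by (intro nn_integral_indicator) auto
  also have "\<dots> = 0" using UN by auto
  finally show ?thesis by simp
qed

lemma LS_const:
  assumes I: "Ifun T F" and T: "0 \<le> T" and z: "(\<integral>\<^sup>+u. indicator A u \<partial>LS_measure T F) = 0"
    and ab: "0 \<le> \<alpha>" "\<alpha> \<le> \<beta>" "\<beta> \<le> T" and sub: "\<And>u. \<alpha> < u \<Longrightarrow> u < \<beta> \<Longrightarrow> u \<in> A"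
  shows "F \<alpha> = F \<beta>"
proof -
  have m: "mono_on {0..T} F" and c: "continuous_on {0..T} F" using I unfolding Ifun_def Cfun_def by auto
  have key: "F \<beta>' = F \<alpha>" if b': "\<alpha> \<le> \<beta>'" "\<beta>' < \<beta>" for \<beta>'
  proof -
    have cl: "max 0 (min T \<alpha>) = \<alpha>" "max 0 (min T \<beta>') = \<beta>'" using ab b' by auto
    have e1: "emeasure (LS_measure T F) {\<alpha><..\<beta>'} = ennreal (F \<beta>' - F \<alpha>)"
      using emeas_Ioc[OF I T b'(1)] cl by simp
    have "emeasure (LS_measure T F) {\<alpha><..\<beta>'} = (\<integral>\<^sup>+u. indicator {\<alpha><..\<beta>'} u \<partial>LS_measure T F)"
      by (rule nn_integral_indicator[symmetric]) (simp add: LS_measure_def)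
    also have "\<dots> \<le> (\<integral>\<^sup>+u. indicator A u \<partial>LS_measure T F)"
      by (rule nn_integral_mono) (use sub b' in \<open>auto simp: indicator_def\<close>)
    finally have "ennreal (F \<beta>' - F \<alpha>) = 0" using e1 z by simp
    then have "F \<beta>' \<le> F \<alpha>" by (simp add: ennreal_eq_0_iff)
    moreover have "F \<alpha> \<le> F \<beta>'" by (rule mono_onD[OF m]) (use ab b' in auto)
    ultimately show ?thesis by simp
  qed
  show ?thesis
  proof (rule ccontr)
    assume ne: "F \<alpha> \<noteq> F \<beta>"
    then have lt: "\<alpha> < \<beta>" using ab by (cases "\<alpha> = \<beta>") auto
    have bT: "\<beta> \<in> {0..T}" using ab by auto
    have epos: "\<bar>F \<beta> - F \<alpha>\<bar> > 0" using ne by simp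
    obtain d where d: "d > 0" "\<forall>v\<in>{0..T}. dist v \<beta> < d \<longrightarrow> dist (F v) (F \<beta>) < \<bar>F \<beta> - F \<alpha>\<bar>"
      using c bT epos unfolding continuous_on_iff by blast
    define v where "v = max \<alpha> (\<beta> - d/2)"
    have v: "v \<in> {0..T}" "dist v \<beta> < d" "\<alpha> \<le> v" "v < \<beta>" using ab lt d unfolding v_def by (auto simp: dist_real_def)
    have "dist (F v) (F \<beta>) < \<bar>F \<beta> - F \<alpha>\<bar>" using d v by blast
    then show False using key[OF v(3,4)] by (simp add: dist_real_def abs_minus_commute)
  qed
qed

lemma root_exists:
  fixes f :: "real \<Rightarrow> real"
  assumes sm: "strict_mono f" and c: "c > 0"
    and b1: "\<And>x y. c*\<bar>x-y\<bar> \<le> \<bar>f x - f y\<bar>" and b2: "\<And>x y. \<bar>f x - f y\<bar> \<le> C*\<bar>x-y\<bar>"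
  shows "\<exists>y. f y = 0"
proof -
  have C0: "0 \<le> C" using b2[of 1 0] by simp
  define m where "m = \<bar>f 0\<bar>/c"
  have m0: "0 \<le> m" using c unfolding m_def by simp
  have cm: "c * m = \<bar>f 0\<bar>" using c unfolding m_def by simp
  have cont: "continuous_on {-m..m} f"
    by (rule lipschitz_on_continuous_on[OF lipschitz_onI[of _ _ C]]) (use b2 C0 in \<open>auto simp: dist_real_def\<close>)
  have "f 0 \<le> f m" using sm m0 by (simp add: strict_mono_less_eq)
  moreover have "c * \<bar>m - 0\<bar> \<le> \<bar>f m - f 0\<bar>" by (rule b1)
  ultimately have up: "0 \<le> f m" using cm m0 by (auto simp: abs_if split: if_splits)
  have "f (-m) \<le> f 0" using sm m0 by (simp add: strict_mono_less_eq)
  moreover have "c * \<bar>-m - 0\<bar> \<le> \<bar>f (-m) - f 0\<bar>" by (rule b1)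
  ultimately have dn: "f (-m) \<le> 0" using cm m0 by (auto simp: abs_if split: if_splits)
  show ?thesis using IVT'[of f "-m" 0 m] up dn m0 cont by auto
qed

lemma loc_const:
  fixes \<phi> F :: "real \<Rightarrow> real"
  assumes \<phi>c: "continuous_on {0..T} \<phi>"
    and iv: "\<And>\<alpha> \<beta>. 0 \<le> \<alpha> \<Longrightarrow> \<alpha> \<le> \<beta> \<Longrightarrow> \<beta> \<le> T \<Longrightarrow> (\<And>u. \<alpha> \<le> u \<Longrightarrow> u \<le> \<beta> \<Longrightarrow> 0 < \<phi> u) \<Longrightarrow> F \<alpha> = F \<beta>"
    and u: "u \<in> {0..T}" "0 < \<phi> u"
  shows "\<exists>\<epsilon>>0. \<forall>v\<in>{0..T}. \<forall>w\<in>{0..T}. \<bar>v - u\<bar> < \<epsilon> \<longrightarrow> \<bar>w - u\<bar> < \<epsilon> \<longrightarrow> F v = F w"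
proof -
  obtain d where d: "d > 0" "\<forall>v\<in>{0..T}. dist v u < d \<longrightarrow> dist (\<phi> v) (\<phi> u) < \<phi> u"
    using \<phi>c u unfolding continuous_on_iff by blast
  have pos: "0 < \<phi> z" if "z \<in> {0..T}" "\<bar>z - u\<bar> < d" for z
  proof -
    have "dist (\<phi> z) (\<phi> u) < \<phi> u" using d that by (auto simp: dist_real_def)
    then show ?thesis by (simp add: dist_real_def abs_less_iff)
  qed
  have main: "F v = F w" if "v \<in> {0..T}" "w \<in> {0..T}" "\<bar>v - u\<bar> < d" "\<bar>w - u\<bar> < d" "v \<le> w" for v w
  proof (rule iv)
    show "0 \<le> v" "v \<le> w" "w \<le> T" using that by auto
    fix z assume "v \<le> z" "z \<le> w"
    then show "0 < \<phi> z" using pos[of z] that by (auto simp: abs_less_iff)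
  qed
  show ?thesis
  proof (intro exI[of _ d] conjI ballI impI)
    fix v w assume vw: "v \<in> {0..T}" "w \<in> {0..T}" "\<bar>v - u\<bar> < d" "\<bar>w - u\<bar> < d"
    show "F v = F w"
    proof (cases "v \<le> w")
      case True then show ?thesis using main vw by blast
    next
      case False then show ?thesis using main[of w v] vw by auto
    qed
  qed (use d in auto)
qed

lemma uniq_le:
  assumes T: "0 \<le> T" and sm: "\<And>t. t\<in>{0..T} \<Longrightarrow> strict_mono (l t) \<and> strict_mono (r t)"
   and S1: "BSP_solution T l r s a x k" and S2: "BSP_solution T l r s a x' k'"
   and t1: "t1 \<in> {0..T}"
  shows "x t1 \<le> x' t1"
proof (rule ccontr)
  assume "\<not> x t1 \<le> x' t1"
  then have gt: "x' t1 < x t1" by simp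
  note S1' = S1[unfolded BSP_solution_def] and S2' = S2[unfolded BSP_solution_def]
  obtain kr kl where K: "Ifun T kr" "Ifun T kl" "\<forall>t\<in>{0..T}. k t = kr t - kl t"
      "(\<integral>\<^sup>+ u. indicator {u\<in>{0..T}. l u (x u) < 0} u \<partial>LS_measure T kl) = 0"
      "(\<integral>\<^sup>+ u. indicator {u\<in>{0..T}. r u (x u) > 0} u \<partial>LS_measure T kr) = 0"
    using S1' by blast
  obtain kr' kl' where K': "Ifun T kr'" "Ifun T kl'" "\<forall>t\<in>{0..T}. k' t = kr' t - kl' t"
      "(\<integral>\<^sup>+ u. indicator {u\<in>{0..T}. l u (x' u) < 0} u \<partial>LS_measure T kl') = 0"
      "(\<integral>\<^sup>+ u. indicator {u\<in>{0..T}. r u (x' u) > 0} u \<partial>LS_measure T kr') = 0"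
    using S2' by blast
  have cx: "continuous_on {0..T} x" "continuous_on {0..T} x'" using S1' S2' unfolding Cfun_def by auto
  have ex: "\<And>t. t\<in>{0..T} \<Longrightarrow> x t = a + s T - s t + k T - k t" using S1' by blast
  have ex': "\<And>t. t\<in>{0..T} \<Longrightarrow> x' t = a + s T - s t + k' T - k' t" using S2' by blast
  have bx: "\<And>t. t\<in>{0..T} \<Longrightarrow> l t (x t) \<le> 0 \<and> 0 \<le> r t (x t)" using S1' by blast
  have bx': "\<And>t. t\<in>{0..T} \<Longrightarrow> l t (x' t) \<le> 0 \<and> 0 \<le> r t (x' t)" using S2' by blast
  have TT: "T \<in> {0..T}" using T by auto
  have xT: "x T = a" "x' T = a" using ex[OF TT] ex'[OF TT] by auto
  define S where "S = {t1..T} \<inter> (\<lambda>t. x t - x' t) -` {..0}"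
  have cS: "continuous_on {t1..T} (\<lambda>t. x t - x' t)"
  proof -
    have sub: "{t1..T} \<subseteq> {0..T}" using t1 by auto
    show ?thesis using continuous_on_subset[OF cx(1) sub] continuous_on_subset[OF cx(2) sub]
      by (rule continuous_on_diff)
  qed
  have clS: "closed S" unfolding S_def by (rule continuous_closed_preimage[OF cS]) auto
  have TS: "T \<in> S" unfolding S_def using xT t1 by auto
  have bS: "bdd_below S" unfolding S_def by (rule bdd_belowI[of _ t1]) auto
  define t0 where "t0 = Inf S"
  have t0S: "t0 \<in> S" unfolding t0_def using closed_contains_Inf[OF _ bS clS] TS by auto
  have t10: "t1 \<le> t0" unfolding t0_def by (rule cInf_greatest) (use TS S_def in auto)
  have t0: "t0 \<le> T" "x t0 \<le> x' t0" using t0S unfolding S_def by auto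
  have t0in: "t0 \<in> {0..T}" using t10 t0 t1 by auto
  have between: "x' u < x u" if "t1 \<le> u" "u < t0" for u
  proof (rule ccontr)
    assume "\<not> x' u < x u"
    then have "u \<in> S" unfolding S_def using that t0 by auto
    then have "t0 \<le> u" unfolding t0_def using bS by (rule cInf_lower)
    then show False using that by simp
  qed
  have uin: "u \<in> {0..T}" if "t1 < u" "u < t0" for u using that t1 t0 by auto
  have e1: "kr t1 = kr t0"
  proof (rule LS_const[OF K(1) T K(5)])
    show "0 \<le> t1" "t1 \<le> t0" "t0 \<le> T" using t1 t10 t0 by auto
    fix u assume u: "t1 < u" "u < t0"
    have "r u (x' u) < r u (x u)" using sm[OF uin[OF u]] between[of u] u by (simp add: strict_mono_less)
    moreover have "0 \<le> r u (x' u)" using bx'[OF uin[OF u]] by simp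
    ultimately show "u \<in> {u\<in>{0..T}. r u (x u) > 0}" using uin[OF u] by simp
  qed
  have e2: "kl' t1 = kl' t0"
  proof (rule LS_const[OF K'(2) T K'(4)])
    show "0 \<le> t1" "t1 \<le> t0" "t0 \<le> T" using t1 t10 t0 by auto
    fix u assume u: "t1 < u" "u < t0"
    have "l u (x' u) < l u (x u)" using sm[OF uin[OF u]] between[of u] u by (simp add: strict_mono_less)
    moreover have "l u (x u) \<le> 0" using bx[OF uin[OF u]] by simp
    ultimately show "u \<in> {u\<in>{0..T}. l u (x' u) < 0}" using uin[OF u] by simp
  qed
  have m1: "kl t1 \<le> kl t0" using K(2) t1 t0in t10 unfolding Ifun_def by (auto intro: mono_onD)
  have m2: "kr' t1 \<le> kr' t0" using K'(1) t1 t0in t10 unfolding Ifun_def by (auto intro: mono_onD)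
  have "x t1 - x' t1 = x t0 - x' t0 + (k t0 - k t1) - (k' t0 - k' t1)"
    using ex[OF t1] ex'[OF t1] ex[OF t0in] ex'[OF t0in] by simp
  also have "\<dots> = x t0 - x' t0 - (kl t0 - kl t1) - (kr' t0 - kr' t1)"
    using K(3) K'(3) t1 t0in e1 e2 by auto
  finally show False using m1 m2 t0(2) gt by linarith
qed

theorem mainTheorem1:
  fixes T :: real and l r :: "real \<Rightarrow> real \<Rightarrow> real"
  assumes "T > 0" and "assumptionA T l r"
    and "Cfun T s" and "l T a \<le> 0" and "0 \<le> r T a"
  shows "(\<exists>x k. BSP_solution T l r s a x k) \<and>
         (\<forall>x k x' k'. BSP_solution T l r s a x k \<and> BSP_solution T l r s a x' k' \<longrightarrow>
            (\<forall>t\<in>{0..T}. x t = x' t \<and> k t = k' t))"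
proof -
  note A = assms(2)[unfolded assumptionA_def]
  note A1 = conjunct1[OF A] and A2 = conjunct1[OF conjunct2[OF A]]
    and A3 = conjunct1[OF conjunct2[OF conjunct2[OF A]]] and A4 = conjunct2[OF conjunct2[OF conjunct2[OF A]]]
  have T0: "0 \<le> T" using assms(1) by simp
  have TT: "T \<in> {0..T}" using T0 by simp
  have lcont: "\<And>x. continuous_on {0..T} (\<lambda>t. l t x)" "\<And>x. continuous_on {0..T} (\<lambda>t. r t x)" using A1 by auto
  have smono: "\<And>t. t \<in> {0..T} \<Longrightarrow> strict_mono (l t)" "\<And>t. t \<in> {0..T} \<Longrightarrow> strict_mono (r t)" using A2 by auto
  obtain c C where cC: "0 < c" "c < C" and bnd0: "\<forall>t\<in>{0..T}. \<forall>x y. c*\<bar>x-y\<bar> \<le> \<bar>l t x - l t y\<bar> \<and> \<bar>l t x - l t y\<bar> \<le> C*\<bar>x-y\<bar> \<and>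
        c*\<bar>x-y\<bar> \<le> \<bar>r t x - r t y\<bar> \<and> \<bar>r t x - r t y\<bar> \<le> C*\<bar>x-y\<bar>"
    using A3 by blast
  have bnd: "\<And>t x y. t\<in>{0..T} \<Longrightarrow> c*\<bar>x-y\<bar> \<le> \<bar>l t x - l t y\<bar> \<and> \<bar>l t x - l t y\<bar> \<le> C*\<bar>x-y\<bar> \<and>
        c*\<bar>x-y\<bar> \<le> \<bar>r t x - r t y\<bar> \<and> \<bar>r t x - r t y\<bar> \<le> C*\<bar>x-y\<bar>"
    using bnd0 by blast
  obtain \<delta> where \<delta>: "\<delta> > 0" and \<delta>0: "\<forall>t\<in>{0..T}. \<forall>x. \<delta> \<le> r t x - l t x" using A4 by blast
  have \<delta>2: "\<And>t x. t\<in>{0..T} \<Longrightarrow> \<delta> \<le> r t x - l t x" using \<delta>0 by blast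
  define hi where "hi t = (SOME y. l t y = 0)" for t
  define lo where "lo t = (SOME y. r t y = 0)" for t
  have hi0: "l t (hi t) = 0" if "t\<in>{0..T}" for t
    unfolding hi_def by (rule someI_ex, rule root_exists[OF smono(1)[OF that] cC(1)]) (use bnd[OF that] in auto)
  have lo0: "r t (lo t) = 0" if "t\<in>{0..T}" for t
    unfolding lo_def by (rule someI_ex, rule root_exists[OF smono(2)[OF that] cC(1)]) (use bnd[OF that] in auto)
  have chl: "l t y \<le> 0 \<longleftrightarrow> y \<le> hi t" "l t y < 0 \<longleftrightarrow> y < hi t" if "t\<in>{0..T}" for t y
    using strict_mono_less_eq[OF smono(1)[OF that], of y "hi t"] strict_mono_less[OF smono(1)[OF that], of y "hi t"]
      hi0[OF that] by auto
  have chr: "0 \<le> r t y \<longleftrightarrow> lo t \<le> y" "0 < r t y \<longleftrightarrow> lo t < y" if "t\<in>{0..T}" for t y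
    using strict_mono_less_eq[OF smono(2)[OF that], of "lo t" y] strict_mono_less[OF smono(2)[OF that], of "lo t" y]
      lo0[OF that] by auto
  define \<eta> where "\<eta> = \<delta> / C"
  have \<eta>0: "\<eta> > 0" unfolding \<eta>_def using \<delta> cC by simp
  have gap: "\<eta> \<le> hi t - lo t" if "t\<in>{0..T}" for t
  proof -
    have r1: "\<delta> \<le> r t (hi t)" using \<delta>2[OF that, of "hi t"] hi0[OF that] by simp
    then have "lo t < hi t" using chr(2)[OF that, of "hi t"] \<delta> by simp
    moreover have "\<bar>r t (hi t) - r t (lo t)\<bar> \<le> C * \<bar>hi t - lo t\<bar>" using bnd[OF that] by blast
    ultimately have "\<delta> \<le> C * (hi t - lo t)" using r1 lo0[OF that] by simp
    then show ?thesis unfolding \<eta>_def using cC by (simp add: pos_divide_le_eq mult.commute)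
  qed
  have conthi: "continuous_on {0..T} hi"
    unfolding continuous_on_iff
  proof (intro ballI allI impI)
    fix t e :: real assume t: "t \<in> {0..T}" and e: "0 < e"
    obtain d where d: "d > 0" "\<forall>t'\<in>{0..T}. dist t' t < d \<longrightarrow> dist (l t' (hi t)) (l t (hi t)) < c * e"
    proof -
      have ce: "c * e > 0" using cC e by simp
      show ?thesis using lcont(1)[of "hi t", unfolded continuous_on_iff] t ce that by blast
    qed
    show "\<exists>d>0. \<forall>t'\<in>{0..T}. dist t' t < d \<longrightarrow> dist (hi t') (hi t) < e"
    proof (intro exI[of _ d] conjI ballI impI)
      fix t' assume t': "t' \<in> {0..T}" "dist t' t < d"
      have "c * \<bar>hi t' - hi t\<bar> \<le> \<bar>l t' (hi t') - l t' (hi t)\<bar>" using bnd[OF t'(1)] by blast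
      also have "\<dots> = dist (l t' (hi t)) (l t (hi t))" using hi0[OF t'(1)] hi0[OF t] by (simp add: dist_real_def)
      also have "\<dots> < c * e" using d t' by blast
      finally show "dist (hi t') (hi t) < e" using cC by (simp add: dist_real_def)
    qed (use d in auto)
  qed
  have contlo: "continuous_on {0..T} lo"
    unfolding continuous_on_iff
  proof (intro ballI allI impI)
    fix t e :: real assume t: "t \<in> {0..T}" and e: "0 < e"
    obtain d where d: "d > 0" "\<forall>t'\<in>{0..T}. dist t' t < d \<longrightarrow> dist (r t' (lo t)) (r t (lo t)) < c * e"
    proof -
      have ce: "c * e > 0" using cC e by simp
      show ?thesis using lcont(2)[of "lo t", unfolded continuous_on_iff] t ce that by blast
    qed
    show "\<exists>d>0. \<forall>t'\<in>{0..T}. dist t' t < d \<longrightarrow> dist (lo t') (lo t) < e"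
    proof (intro exI[of _ d] conjI ballI impI)
      fix t' assume t': "t' \<in> {0..T}" "dist t' t < d"
      have "c * \<bar>lo t' - lo t\<bar> \<le> \<bar>r t' (lo t') - r t' (lo t)\<bar>" using bnd[OF t'(1)] by blast
      also have "\<dots> = dist (r t' (lo t)) (r t (lo t))" using lo0[OF t'(1)] lo0[OF t] by (simp add: dist_real_def)
      also have "\<dots> < c * e" using d t' by blast
      finally show "dist (lo t') (lo t) < e" using cC by (simp add: dist_real_def)
    qed (use d in auto)
  qed
  have conts: "continuous_on {0..T} s" using assms(3) unfolding Cfun_def .
  have e4: "\<eta>/4 > 0" using \<eta>0 by simp
  obtain d1 where d1: "d1 > 0" "\<forall>x\<in>{0..T}. \<forall>x'\<in>{0..T}. dist x' x < d1 \<longrightarrow> dist (s x') (s x) < \<eta>/4"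
    using compact_uniformly_continuous[OF conts] e4 unfolding uniformly_continuous_on_def by blast
  obtain d2 where d2: "d2 > 0" "\<forall>x\<in>{0..T}. \<forall>x'\<in>{0..T}. dist x' x < d2 \<longrightarrow> dist (hi x') (hi x) < \<eta>/4"
    using compact_uniformly_continuous[OF conthi] e4 unfolding uniformly_continuous_on_def by blast
  obtain d3 where d3: "d3 > 0" "\<forall>x\<in>{0..T}. \<forall>x'\<in>{0..T}. dist x' x < d3 \<longrightarrow> dist (lo x') (lo x) < \<eta>/4"
    using compact_uniformly_continuous[OF contlo] e4 unfolding uniformly_continuous_on_def by blast
  define h where "h = min d1 (min d2 d3) / 2"
  have h0: "h > 0" unfolding h_def using d1 d2 d3 by simp
  have good: "good lo hi s T \<eta> h"
    unfolding good_def
  proof (intro conjI ballI impI)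
    fix t t' assume tt: "t \<in> {0..T}" "t' \<in> {0..T}" "\<bar>t - t'\<bar> \<le> h"
    then have dd: "dist t t' < d1" "dist t t' < d2" "dist t t' < d3"
      using h0 d1 d2 d3 unfolding h_def by (auto simp: dist_real_def)
    have "dist (s t) (s t') < \<eta>/4" using d1(2) tt(1,2) dd(1) by blast
    then show "\<bar>s t - s t'\<bar> < \<eta>/4" by (simp add: dist_real_def)
    have "dist (hi t) (hi t') < \<eta>/4" using d2(2) tt(1,2) dd(2) by blast
    then show "\<bar>hi t - hi t'\<bar> \<le> \<eta>/4" by (simp add: dist_real_def)
    have "dist (lo t) (lo t') < \<eta>/4" using d3(2) tt(1,2) dd(3) by blast
    then show "\<bar>lo t - lo t'\<bar> \<le> \<eta>/4" by (simp add: dist_real_def)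
  qed (use contlo conthi conts \<eta>0 gap in auto)
  have aT: "lo T \<le> a" "a \<le> hi T" using chr(1)[OF TT] chl(1)[OF TT] assms(4,5) by auto
  obtain x R L where cs: "cellsol lo hi s 0 T a x R L" using exists_sol[OF good h0 T0 aT] by blast
  note D = cellsolD[OF cs]
  define kr where "kr t = R 0 - R t" for t
  define kl where "kl t = L 0 - L t" for t
  define k where "k t = kr t - kl t" for t
  have ckr: "continuous_on {0..T} kr" unfolding kr_def using D(2) by (intro continuous_intros)
  have ckl: "continuous_on {0..T} kl" unfolding kl_def using D(3) by (intro continuous_intros)
  have mkr: "mono_on {0..T} kr" unfolding kr_def by (rule mono_onI) (use D(6) in auto)
  have mkl: "mono_on {0..T} kl" unfolding kl_def by (rule mono_onI) (use D(7) in auto)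
  have Ikr: "Ifun T kr" unfolding Ifun_def Cfun_def using ckr mkr by (simp add: kr_def)
  have Ikl: "Ifun T kl" unfolding Ifun_def Cfun_def using ckl mkl by (simp add: kl_def)
  have null_l: "(\<integral>\<^sup>+ u. indicator {u\<in>{0..T}. l u (x u) < 0} u \<partial>LS_measure T kl) = 0"
  proof (rule LS_null[OF Ikl T0])
    show "{u\<in>{0..T}. l u (x u) < 0} \<subseteq> {0..T}" by auto
    fix u assume u: "u \<in> {u\<in>{0..T}. l u (x u) < 0}"
    show "\<exists>\<epsilon>>0. \<forall>v\<in>{0..T}. \<forall>w\<in>{0..T}. \<bar>v - u\<bar> < \<epsilon> \<longrightarrow> \<bar>w - u\<bar> < \<epsilon> \<longrightarrow> kl v = kl w"
    proof (rule loc_const[of T "\<lambda>u. hi u - x u"])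
      show "continuous_on {0..T} (\<lambda>u. hi u - x u)" using conthi D(1) by (intro continuous_intros)
      show "u \<in> {0..T}" "0 < hi u - x u" using u chl(2) by auto
      fix \<alpha> \<beta> assume ab: "0 \<le> \<alpha>" "\<alpha> \<le> \<beta>" "\<beta> \<le> T" "\<And>u. \<alpha> \<le> u \<Longrightarrow> u \<le> \<beta> \<Longrightarrow> 0 < hi u - x u"
      have "L \<alpha> = L \<beta>" by (rule D(12)) (use ab in force)+
      then show "kl \<alpha> = kl \<beta>" unfolding kl_def by simp
    qed
  qed
  have null_r: "(\<integral>\<^sup>+ u. indicator {u\<in>{0..T}. r u (x u) > 0} u \<partial>LS_measure T kr) = 0"
  proof (rule LS_null[OF Ikr T0])
    show "{u\<in>{0..T}. r u (x u) > 0} \<subseteq> {0..T}" by auto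
    fix u assume u: "u \<in> {u\<in>{0..T}. r u (x u) > 0}"
    show "\<exists>\<epsilon>>0. \<forall>v\<in>{0..T}. \<forall>w\<in>{0..T}. \<bar>v - u\<bar> < \<epsilon> \<longrightarrow> \<bar>w - u\<bar> < \<epsilon> \<longrightarrow> kr v = kr w"
    proof (rule loc_const[of T "\<lambda>u. x u - lo u"])
      show "continuous_on {0..T} (\<lambda>u. x u - lo u)" using contlo D(1) by (intro continuous_intros)
      show "u \<in> {0..T}" "0 < x u - lo u" using u chr(2) by auto
      fix \<alpha> \<beta> assume ab: "0 \<le> \<alpha>" "\<alpha> \<le> \<beta>" "\<beta> \<le> T" "\<And>u. \<alpha> \<le> u \<Longrightarrow> u \<le> \<beta> \<Longrightarrow> 0 < x u - lo u"
      have "R \<alpha> = R \<beta>" by (rule D(11)) (use ab in force)+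
      then show "kr \<alpha> = kr \<beta>" unfolding kr_def by simp
    qed
  qed
  have sol: "BSP_solution T l r s a x k"
    unfolding BSP_solution_def
  proof (intro conjI)
    show "Cfun T x" unfolding Cfun_def by (rule D(1))
    show "BVfun T k" unfolding BVfun_def Cfun_def k_def
      using ckr ckl bv_diff[OF mkr mkl] by (auto intro: continuous_intros simp: kr_def kl_def)
    show "\<forall>t\<in>{0..T}. x t = a + s T - s t + k T - k t"
      using D(8) D(4,5) unfolding k_def kr_def kl_def by auto
    show "\<forall>t\<in>{0..T}. l t (x t) \<le> 0 \<and> 0 \<le> r t (x t)"
      using D(9,10) chl(1) chr(1) by auto
    show "\<exists>kr kl. Ifun T kr \<and> Ifun T kl \<and> (\<forall>t\<in>{0..T}. k t = kr t - kl t) \<and>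
        (\<integral>\<^sup>+ u. indicator {u\<in>{0..T}. l u (x u) < 0} u \<partial>LS_measure T kl) = 0 \<and>
        (\<integral>\<^sup>+ u. indicator {u\<in>{0..T}. r u (x u) > 0} u \<partial>LS_measure T kr) = 0"
      using Ikr Ikl null_l null_r unfolding k_def by blast
  qed
  have uniq: "\<forall>t\<in>{0..T}. x t = x' t \<and> k t = k' t"
    if S1: "BSP_solution T l r s a x k" and S2: "BSP_solution T l r s a x' k'" for x k x' k'
  proof -
    have sm: "\<And>t. t\<in>{0..T} \<Longrightarrow> strict_mono (l t) \<and> strict_mono (r t)" using smono by blast
    have xx: "x t = x' t" if "t \<in> {0..T}" for t
      using uniq_le[OF T0 sm S1 S2 that] uniq_le[OF T0 sm S2 S1 that] by simp
    have ex: "\<And>t. t\<in>{0..T} \<Longrightarrow> x t = a + s T - s t + k T - k t" using S1 unfolding BSP_solution_def by blast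
    have ex': "\<And>t. t\<in>{0..T} \<Longrightarrow> x' t = a + s T - s t + k' T - k' t" using S2 unfolding BSP_solution_def by blast
    have k0: "k 0 = 0" "k' 0 = 0" using S1 S2 unfolding BSP_solution_def BVfun_def by auto
    have 0: "0 \<in> {0..T}" using T0 by simp
    have kT: "k T = k' T" using ex[OF 0] ex'[OF 0] xx[OF 0] k0 by simp
    show ?thesis
    proof
      fix t assume t: "t \<in> {0..T}"
      show "x t = x' t \<and> k t = k' t" using xx[OF t] ex[OF t] ex'[OF t] kT by simp
    qed
  qed
  show ?thesis using sol uniq by blast
qed

end
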